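(* Let $p$ be a prime, let $\lambda$ be a partition, and write $r(\lambda)=(r_1,\ldots,r_{p-1})$. Then $c^{(p)}_\lambda\neq 0$ if and only if both of the following hold: (i) $p\nmid|\lambda|$; (ii) there exists $a\in\{1,\ldots,p-1\}$ with $r_a=\max r(\lambda)$ such that $\max r(\lambda)\leq |{}^b r(\lambda)|_p$, where $b\in\{1,\ldots,p-1\}$ satisfies $ab\equiv 1 \pmod p$.
   Context: A composition of $n\in\mathbb{N}_0$ is a finite sequence $\delta=(\delta_1,\ldots,\delta_s)$ of positive integers with $\sum_i\delta_i=n$; write $\ell(\delta)=s$, $|\delta|=n$; the unique composition of $0$ is the empty composition. A partition is a composition with $\delta_1\geq\cdots\geq\delta_s$. Partial sums: $\delta^+_j=\sum_{i=1}^j\delta_i$. For a positive integer $d$, $n_d(\delta)=|\{i:\delta_i=d\}|$. For a positive integer $q$, a composition $\delta$ is called $q'$-cumulative if it is nonempty and $q\nmid\delta^+_j$ for all $1\leq j\leq\ell(\delta)$ (the empty composition is not regarded as $q'$-cumulative). For a partition $\lambda$, $\mathscr{C}(\lambda)$ is the set of compositions that are rearrangements of $\lambda$, and $c^{(q)}_\lambda$ is the number of $q'$-cumulative $\delta\in\mathscr{C}(\lambda)$. For $0\leq j\leq q-1$, $r_j(\delta)=\sum_{i\equiv j \,(\mathrm{mod}\ q)}n_i(\delta)$, and $r(\delta)=(r_1(\delta),\ldots,r_{q-1}(\delta))\in\mathbb{N}_0^{q-1}$. For $\mathbf{r}=(r_1,\ldots,r_{q-1})\in\mathbb{N}_0^{q-1}$: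 $|\mathbf{r}|_q=(q-1)+\sum_{i=2}^{q-1}(q-i)r_i$, $\max\mathbf{r}=\max\{r_1,\ldots,r_{q-1}\}$, and for $a$ invertible modulo $q$, ${}^a\mathbf{r}=(r'_1,\ldots,r'_{q-1})$ where $r'_j=r_i$ whenever $j\equiv ai \pmod q$ ($1\le i,j\le q-1$). *)

theory Defs
  imports Main "HOL-Library.Multiset" "HOL-Number_Theory.Cong"
begin

definition is_composition :: "nat list \<Rightarrow> bool" where
  "is_composition \<delta> \<longleftrightarrow> (\<forall>x\<in>set \<delta>. 0 < x)"

definition is_partition :: "nat list \<Rightarrow> bool" where
  "is_partition lam \<longleftrightarrow> is_composition lam \<and> sorted_wrt (\<ge>) lam"

definition psum :: "nat list \<Rightarrow> nat \<Rightarrow> nat" where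
  "psum \<delta> j = sum_list (take j \<delta>)"

definition cumulative :: "nat \<Rightarrow> nat list \<Rightarrow> bool" where
  "cumulative q \<delta> \<longleftrightarrow> \<delta> \<noteq> [] \<and> (\<forall>j\<in>{1..length \<delta>}. \<not> q dvd psum \<delta> j)"

definition rearrangements :: "nat list \<Rightarrow> nat list set" where
  "rearrangements lam = {\<delta>. mset \<delta> = mset lam}"

definition cnum :: "nat \<Rightarrow> nat list \<Rightarrow> nat" where
  "cnum q lam = card {\<delta> \<in> rearrangements lam. cumulative q \<delta>}"

definition nmult :: "nat \<Rightarrow> nat list \<Rightarrow> nat" where
  "nmult d \<delta> = card {i. i < length \<delta> \<and> \<delta> ! i = d}"

definition rvec :: "nat \<Rightarrow> nat list \<Rightarrow> nat \<Rightarrow> nat" where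
  "rvec q \<delta> j = (\<Sum>i\<in>{i\<in>set \<delta>. [i = j] (mod q)}. nmult i \<delta>)"

text \<open>Vectors r in N_0^(q-1) are functions nat => nat, only the entries 1..q-1 matter.\<close>
definition qnorm :: "nat \<Rightarrow> (nat \<Rightarrow> nat) \<Rightarrow> nat" where
  "qnorm q r = (q - 1) + (\<Sum>i=2..q-1. (q - i) * r i)"

definition vmax :: "nat \<Rightarrow> (nat \<Rightarrow> nat) \<Rightarrow> nat" where
  "vmax q r = Max (r ` {1..q-1})"

definition twist :: "nat \<Rightarrow> nat \<Rightarrow> (nat \<Rightarrow> nat) \<Rightarrow> nat \<Rightarrow> nat" where
  "twist q a r j = r (THE i. i \<in> {1..q-1} \<and> [j = a * i] (mod q))"

end

theory Submission imports Defs begin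

lemma cong_nat_int: "[x = y] (mod p) \<longleftrightarrow> (int p dvd int x - int y)"
  by (simp add: cong_int_iff[symmetric] cong_iff_dvd_diff)

lemma small_ndvd: fixes a p :: nat assumes "1 \<le> a" "a < p" shows "\<not> p dvd a"
proof
  assume "p dvd a" then have "p \<le> a" using assms(1) dvd_imp_le[of p a] by simp
  then show False using assms(2) by simp
qed

lemma cop: fixes a p :: nat assumes "prime p" "1 \<le> a" "a < p" shows "coprime a p"
  using prime_imp_coprime[OF assms(1) small_ndvd[OF assms(2,3)]] by (simp add: coprime_commute)

lemma small_cong_eq: fixes x y p :: nat assumes "[x = y] (mod p)" "x < p" "y < p" shows "x = y"
  using assms unfolding cong_def by simp

definition hh :: "nat \<Rightarrow> nat \<Rightarrow> nat \<Rightarrow> nat" where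
  "hh p a y = (\<Sum>j=2..p-1. if [y = a*j] (mod p) then p - j else 0)"

definition cntm :: "nat \<Rightarrow> nat \<Rightarrow> nat multiset \<Rightarrow> nat" where
  "cntm p a M = size (filter_mset (\<lambda>y. [y = a] (mod p)) M)"

definition Gm :: "nat \<Rightarrow> nat \<Rightarrow> nat multiset \<Rightarrow> nat" where
  "Gm p a M = (\<Sum>y\<in>#M. hh p a y)"

definition good :: "nat \<Rightarrow> nat multiset \<Rightarrow> bool" where
  "good p M \<longleftrightarrow> \<not> p dvd \<Sum>\<^sub># M \<and> (\<forall>a\<in>{1..p-1}. cntm p a M \<le> p - 1 + Gm p a M)"

lemma cntm_add: "cntm p a (add_mset y M) = cntm p a M + (if [y = a] (mod p) then 1 else 0)"
  by (simp add: cntm_def)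

lemma Gm_add: "Gm p a (add_mset y M) = Gm p a M + hh p a y"
  by (simp add: Gm_def)

lemma cntm_empty[simp]: "cntm p a {#} = 0" by (simp add: cntm_def)
lemma Gm_empty[simp]: "Gm p a {#} = 0" by (simp add: Gm_def)

context
  fixes p a :: nat
  assumes pp: "prime p" and a1: "1 \<le> a" and ap: "a < p"
begin

lemma p2: "2 \<le> p" using pp prime_ge_2_nat by blast

lemma aj_ndvd: assumes "1 \<le> j" "j < p" shows "\<not> p dvd a * j"
  using assms pp a1 ap small_ndvd prime_dvd_mult_iff by blast

lemma hh_a: assumes "[y = a] (mod p)" shows "hh p a y = 0"
  unfolding hh_def
proof (rule sum.neutral, rule ballI)
  fix j assume j: "j \<in> {2..p-1}"
  show "(if [y = a * j] (mod p) then p - j else 0) = 0"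
  proof (cases "[y = a * j] (mod p)")
    case False then show ?thesis by simp
  next
    case c: True
    have "[a * j = a * 1] (mod p)" using cong_trans[OF cong_sym[OF c] assms] by simp
    then have "[j = 1] (mod p)" using cong_mult_lcancel_nat cop[OF pp a1 ap] by blast
    moreover have "j < p" "1 < p" using j p2 by auto
    ultimately have "j = 1" by (rule small_cong_eq)
    then show ?thesis using j by auto
  qed
qed

lemma hh_0: assumes "[y = 0] (mod p)" shows "hh p a y = 0"
  unfolding hh_def
proof (rule sum.neutral, rule ballI)
  fix j assume j: "j \<in> {2..p-1}"
  show "(if [y = a * j] (mod p) then p - j else 0) = 0"
  proof (cases "[y = a * j] (mod p)")
    case False then show ?thesis by simp
  next
    case c: True
    have "[a * j = 0] (mod p)" using cong_trans[OF cong_sym[OF c] assms] .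
    then have "p dvd a * j" by (simp add: cong_0_iff)
    moreover have "1 \<le> j" "j < p" using j p2 by auto
    ultimately show ?thesis using aj_ndvd by blast
  qed
qed

lemma hh_val: assumes j0: "j0 \<in> {2..p-1}" and c: "[y = a*j0] (mod p)" shows "hh p a y = p - j0"
proof -
  have "hh p a y = (\<Sum>j=2..p-1. if j = j0 then p - j0 else 0)"
    unfolding hh_def
  proof (rule sum.cong[OF refl])
    fix j assume j: "j \<in> {2..p-1}"
    have "[y = a * j] (mod p) \<longleftrightarrow> [a*j = a*j0] (mod p)"
      using c by (metis cong_sym cong_trans)
    also have "\<dots> \<longleftrightarrow> [j = j0] (mod p)" using cong_mult_lcancel_nat cop[OF pp a1 ap] by blast
    also have "\<dots> \<longleftrightarrow> j = j0" using j j0 p2 by (auto intro: cong_refl small_cong_eq)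
    finally show "(if [y = a * j] (mod p) then p - j else 0) = (if j = j0 then p - j0 else 0)" by simp
  qed
  also have "\<dots> = p - j0" using j0 by simp
  finally show ?thesis .
qed

lemma j0_ex: assumes ab: "[a*b = 1] (mod p)" and y0: "\<not> [y = 0] (mod p)" and ya: "\<not> [y = a] (mod p)"
  shows "(b*y) mod p \<in> {2..p-1} \<and> [y = a*((b*y) mod p)] (mod p)"
proof -
  have c: "[y = a*((b*y) mod p)] (mod p)"
  proof -
    have "[a*((b*y) mod p) = a*(b*y)] (mod p)" by (simp add: cong_scalar_left)
    moreover have "[a*(b*y) = 1 * y] (mod p)"
      using ab by (metis cong_scalar_right mult.assoc)
    ultimately show ?thesis by (metis cong_sym cong_trans mult_1)
  qed
  have "(b*y) mod p \<noteq> 0" using c y0 by (metis mult_0_right)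
  moreover have "(b*y) mod p \<noteq> 1" using c ya by (metis mult_1_right)
  moreover have "(b*y) mod p < p" using p2 by simp
  ultimately show ?thesis using c by auto
qed

lemma inv_ex: "\<exists>b\<in>{1..p-1}. [a*b = 1] (mod p)"
proof -
  obtain b0 where b0: "[a*b0 = Suc 0] (mod p)" using cong_solve_coprime_nat cop[OF pp a1 ap] by blast
  have "[a*(b0 mod p) = a*b0] (mod p)" by (simp add: cong_scalar_left)
  then have c: "[a*(b0 mod p) = 1] (mod p)" using b0 by (metis One_nat_def cong_trans)
  have "b0 mod p \<noteq> 0"
  proof
    assume "b0 mod p = 0"
    then have "[0 = 1] (mod p)" using c by simp
    then have "p dvd 1" by (metis cong_0_iff cong_sym)
    then show False using p2 by simp
  qed
  moreover have "b0 mod p < p" using p2 by simp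
  ultimately have "b0 mod p \<in> {1..p-1}" by auto
  with c show ?thesis by blast
qed

lemma hh_bounds: assumes y0: "\<not> [y = 0] (mod p)" and ya: "\<not> [y = a] (mod p)"
  shows "1 \<le> hh p a y \<and> hh p a y \<le> p - 2 \<and> (\<exists>j0\<in>{2..p-1}. [y = a*j0] (mod p) \<and> hh p a y = p - j0)"
proof -
  obtain b where b: "[a*b = 1] (mod p)" using inv_ex by blast
  define j0 where "j0 = (b*y) mod p"
  have j0: "j0 \<in> {2..p-1}" "[y = a*j0] (mod p)" using j0_ex[OF b y0 ya] unfolding j0_def by auto
  have "hh p a y = p - j0" using hh_val[OF j0] .
  with j0 show ?thesis by auto
qed


lemma hh_cong: "int p dvd int a * int (hh p a y) - (int a * int (if [y = a] (mod p) then 1 else 0) - int y)"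
proof (cases "[y = a] (mod p)")
  case True
  have "int p dvd int y - int a" using True cong_nat_int by blast
  then show ?thesis using hh_a[OF True] True by simp
next
  case ya: False
  show ?thesis
  proof (cases "[y = 0] (mod p)")
    case True
    have "int p dvd int y - int 0" using True cong_nat_int by blast
    then show ?thesis using hh_0[OF True] ya by simp
  next
    case False
    obtain j0 where j0: "j0 \<in> {2..p-1}" "[y = a*j0] (mod p)" "hh p a y = p - j0"
      using hh_bounds[OF False ya] by blast
    have d: "int p dvd int y - int a * int j0" using cong_nat_int j0(2) by simp
    have "int a * int (hh p a y) - (int a * int (if [y = a] (mod p) then 1 else 0) - int y)
        = int a * int p + (int y - int a * int j0)"
    proof -
      have "int (p - j0) = int p - int j0" using j0(1) by auto
      then show ?thesis using j0 ya by (simp add: algebra_simps)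
    qed
    then show ?thesis using d by (metis dvd_add dvd_triv_right)
  qed
qed

lemma G_cong: "int p dvd int a * int (Gm p a M) - (int a * int (cntm p a M) - int (\<Sum>\<^sub># M))"
proof (induction M)
  case empty then show ?case by simp
next
  case (add y M)
  have "int a * int (Gm p a (add_mset y M)) - (int a * int (cntm p a (add_mset y M)) - int (\<Sum>\<^sub># (add_mset y M)))
     = (int a * int (Gm p a M) - (int a * int (cntm p a M) - int (\<Sum>\<^sub># M)))
       + (int a * int (hh p a y) - (int a * int (if [y = a] (mod p) then 1 else 0) - int y))"
    unfolding cntm_add Gm_add by (simp add: algebra_simps)
  then show ?case using add.IH hh_cong[of y] by (metis dvd_add)
qed

lemma nec_inv:
  assumes ab: "[a*b = 1] (mod p)"
  shows "(\<forall>j\<in>{1..length \<delta>}. \<not> p dvd psum \<delta> j) \<Longrightarrow>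
     cntm p a (mset \<delta>) \<le> (b * sum_list \<delta>) mod p + Gm p a (mset \<delta>)"
proof (induction \<delta> rule: rev_induct)
  case Nil then show ?case by simp
next
  case (snoc y xs)
  have pa: "psum (xs @ [y]) j = psum xs j" if "j \<le> length xs" for j
    using that by (simp add: psum_def)
  have H': "\<forall>j\<in>{1..length xs}. \<not> p dvd psum xs j"
    using snoc.prems pa by (metis atLeastAtMost_iff le_SucI length_append_singleton)
  have ns: "\<not> p dvd (sum_list xs + y)"
    using snoc.prems[rule_format, of "length xs + 1"] by (simp add: psum_def)
  have IH: "cntm p a (mset xs) \<le> (b * sum_list xs) mod p + Gm p a (mset xs)"
    using snoc.IH H' by blast
  define S where "S = sum_list xs"
  define s where "s = (b * S) mod p"
  define s' where "s' = (b * (S + y)) mod p"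
  have sp: "s < p" using p2 unfolding s_def by simp
  have s'0: "s' \<noteq> 0"
  proof
    assume "s' = 0"
    then have "[b*(S+y) = 0] (mod p)" unfolding s'_def cong_def by simp
    then have "[a*(b*(S+y)) = a*0] (mod p)" by (rule cong_scalar_left)
    moreover have "[a*(b*(S+y)) = 1*(S+y)] (mod p)"
      using cong_scalar_right[OF ab, of "S+y"] by (simp add: mult.assoc)
    ultimately have "[S + y = 0] (mod p)" by (metis cong_sym cong_trans mult_0_right mult_1)
    then show False using ns unfolding S_def by (simp add: cong_0_iff)
  qed
  have s's: "s' = (s + (b*y) mod p) mod p"
    unfolding s'_def s_def by (simp add: distrib_left mod_add_eq)
  have ms: "mset (xs @ [y]) = add_mset y (mset xs)" by simp
  have sl: "sum_list (xs @ [y]) = S + y" unfolding S_def by simp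
  show ?case
    unfolding ms sl cntm_add Gm_add
  proof (cases "[y = a] (mod p)")
    case True
    have "[b*y = b*a] (mod p)" using True by (rule cong_scalar_left)
    moreover have "[b*a = 1] (mod p)" using ab by (simp add: mult.commute)
    ultimately have "[b*y = 1] (mod p)" by (rule cong_trans)
    then have "(b*y) mod p = 1" using p2 unfolding cong_def by simp
    then have "s' = (s + 1) mod p" using s's by simp
    moreover have "s + 1 \<noteq> p" using s'0 calculation by auto
    ultimately have "s' = s + 1" using sp by simp
    then show "cntm p a (mset xs) + (if [y = a] (mod p) then 1 else 0)
        \<le> (b * (S + y)) mod p + (Gm p a (mset xs) + hh p a y)"
      using IH hh_a[OF True] True unfolding s'_def s_def S_def by simp
  next
    case ya: False
    show "cntm p a (mset xs) + (if [y = a] (mod p) then 1 else 0)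
        \<le> (b * (S + y)) mod p + (Gm p a (mset xs) + hh p a y)"
    proof (cases "[y = 0] (mod p)")
      case True
      have "[b*y = b*0] (mod p)" using True by (rule cong_scalar_left)
      then have "(b*y) mod p = 0" unfolding cong_def by simp
      then have "s' = s" using s's sp by simp
      then show ?thesis using IH ya unfolding s'_def s_def S_def by simp
    next
      case False
      have j0: "(b*y) mod p \<in> {2..p-1}" "[y = a*((b*y) mod p)] (mod p)"
        using j0_ex[OF ab False ya] by auto
      define j where "j = (b*y) mod p"
      have jj: "j \<in> {2..p-1}" "[y = a*j] (mod p)" using j0 unfolding j_def by auto
      have h: "hh p a y = p - j" using hh_val[OF jj] .
      have s'j: "s' = (s + j) mod p" using s's unfolding j_def .
      have "s + j \<le> s' + p"
      proof (cases "s + j < p")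
        case True then show ?thesis using s'j by simp
      next
        case False
        then have "(s + j) mod p = (s + j - p) mod p" by (simp add: le_mod_geq)
        also have "\<dots> = s + j - p"
        proof -
          have "s + j - p < p" using sp jj by auto
          then show ?thesis by simp
        qed
        finally show ?thesis using s'j by simp
      qed
      then have "s \<le> s' + (p - j)" using jj by auto
      then show ?thesis using IH ya h unfolding s'_def s_def S_def by simp
    qed
  qed
qed

end

lemma cnt_le_G:
  assumes pp: "prime p" and a: "a \<in> {1..p-1}" and c: "c \<in> {1..p-1}" and ac: "a \<noteq> c"
  shows "cntm p a M \<le> Gm p c M"
proof (induction M)
  case empty then show ?case by simp
next
  case (add y M)
  have p2: "2 \<le> p" using pp prime_ge_2_nat by blast
  have "(if [y = a] (mod p) then 1 else 0) \<le> hh p c y"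
  proof (cases "[y = a] (mod p)")
    case False then show ?thesis by simp
  next
    case True
    have y0: "\<not> [y = 0] (mod p)"
    proof
      assume "[y = 0] (mod p)"
      then have "[a = 0] (mod p)" using True by (metis cong_sym cong_trans)
      then have "p dvd a" by (simp add: cong_0_iff)
      moreover have "1 \<le> a" "a < p" using a p2 by auto
      ultimately show False using small_ndvd by blast
    qed
    have yc: "\<not> [y = c] (mod p)"
    proof
      assume "[y = c] (mod p)"
      then have "[a = c] (mod p)" using True by (metis cong_sym cong_trans)
      moreover have "a < p" "c < p" using a c p2 by auto
      ultimately have "a = c" by (rule small_cong_eq)
      then show False using ac by simp
    qed
    have "1 \<le> hh p c y" using hh_bounds[OF pp _ _ y0 yc] c p2 by auto
    then show ?thesis using True by simp
  qed
  then show ?case using add.IH by (simp add: cntm_add Gm_add)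
qed

lemma Gm_zero: "(\<forall>y\<in>#M. hh p a y = 0) \<Longrightarrow> Gm p a M = 0"
  by (induction M) (simp_all add: Gm_add)

lemma cntm_all: "(\<forall>y\<in>#M. [y = a] (mod p)) \<Longrightarrow> cntm p a M = size M"
  by (induction M) (simp_all add: cntm_add)

lemma int_dvd_nonneg: fixes d :: int assumes "int p dvd d" "d > - int p" shows "d \<ge> 0"
proof -
  obtain k where k: "d = int p * k" using assms(1) by (elim dvdE)
  show ?thesis
  proof (rule ccontr)
    assume "\<not> d \<ge> 0"
    then have "int p * k < 0" using k by simp
    then have "k < 0" by (auto simp: mult_less_0_iff)
    then have "k \<le> -1" by simp
    then have "int p * k \<le> int p * (-1)" by (intro mult_left_mono) auto
    then show False using k assms(2) by simp
  qed
qed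

lemma step:
  assumes pp: "prime p" and g: "good p M" and sz: "size M \<ge> 2"
  shows "\<exists>x\<in>#M. good p (M - {#x#})"
proof -
  have p2: "2 \<le> p" using pp prime_ge_2_nat by blast
  have gS: "\<not> p dvd \<Sum>\<^sub># M" and gC: "\<And>c. c \<in> {1..p-1} \<Longrightarrow> cntm p c M \<le> p - 1 + Gm p c M"
    using g unfolding good_def by auto
  show ?thesis
  proof (cases "\<exists>x\<in>#M. p dvd x")
    case True
    then obtain x where x: "x \<in># M" "p dvd x" by blast
    define M' where "M' = M - {#x#}"
    have MM: "M = add_mset x M'" unfolding M'_def using insert_DiffM[OF x(1)] by simp
    have x0: "[x = 0] (mod p)" using x(2) by (simp add: cong_0_iff)
    have "good p M'"
      unfolding good_def
    proof (intro conjI ballI)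
      show "\<not> p dvd \<Sum>\<^sub># M'"
        using gS x(2) unfolding MM by (auto simp: dvd_add)
    next
      fix c assume c: "c \<in> {1..p-1}"
      have nc: "\<not> [x = c] (mod p)"
      proof
        assume "[x = c] (mod p)"
        then have "[c = 0] (mod p)" using x0 by (metis cong_sym cong_trans)
        then have "p dvd c" by (simp add: cong_0_iff)
        moreover have "1 \<le> c" "c < p" using c p2 by auto
        ultimately show False using small_ndvd by blast
      qed
      have "hh p c x = 0" using hh_0[OF pp _ _ x0] c p2 by auto
      then show "cntm p c M' \<le> p - 1 + Gm p c M'"
        using gC[OF c] nc unfolding MM cntm_add Gm_add by simp
    qed
    then show ?thesis using x(1) unfolding M'_def by blast
  next
    case NZ: False
    have fin: "finite ((\<lambda>c. cntm p c M) ` {1..p-1})" by simp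
    have ne: "(\<lambda>c. cntm p c M) ` {1..p-1} \<noteq> {}" using p2 by auto
    obtain a where a: "a \<in> {1..p-1}" "cntm p a M = Max ((\<lambda>c. cntm p c M) ` {1..p-1})"
      using Max_in[OF fin ne] by auto
    have amax: "\<And>c. c \<in> {1..p-1} \<Longrightarrow> cntm p c M \<le> cntm p a M"
      using a(2) fin by auto
    have a1: "1 \<le> a" and ap: "a < p" using a p2 by auto
    have Mne: "M \<noteq> {#}" using sz by auto
    then obtain y where y: "y \<in># M" by auto
    define S where "S = \<Sum>\<^sub># M"
    show ?thesis
    proof (cases "[S = a] (mod p)")
      case False
      define c where "c = y mod p"
      have "\<not> p dvd y" using NZ y by blast
      then have "y mod p \<noteq> 0" by (simp add: mod_eq_0_iff_dvd)
      moreover have "y mod p < p" using p2 by simp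
      ultimately have c: "c \<in> {1..p-1}" unfolding c_def by auto
      have "y \<in># filter_mset (\<lambda>z. [z = c] (mod p)) M" using y unfolding c_def by (simp add: cong_def)
      then have "cntm p c M \<ge> 1" unfolding cntm_def
        by (metis One_nat_def Suc_leI empty_iff neq0_conv set_mset_empty size_eq_0_iff_empty)
      then have "cntm p a M \<ge> 1" using amax[OF c] by simp
      then have "filter_mset (\<lambda>z. [z = a] (mod p)) M \<noteq> {#}" unfolding cntm_def
        by (metis One_nat_def not_one_le_zero size_empty)
      then obtain x where "x \<in># filter_mset (\<lambda>z. [z = a] (mod p)) M" by blast
      then have x: "x \<in># M" "[x = a] (mod p)" by auto
      define M' where "M' = M - {#x#}"
      have MM: "M = add_mset x M'" unfolding M'_def using insert_DiffM[OF x(1)] by simp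
      have "good p M'"
        unfolding good_def
      proof (intro conjI ballI)
        show "\<not> p dvd \<Sum>\<^sub># M'"
        proof
          assume "p dvd \<Sum>\<^sub># M'"
          obtain T where T: "T = \<Sum>\<^sub># M'" by blast
          have ST: "S = T + x" unfolding S_def MM T by simp
          have i1: "int p dvd int T - int 0" using \<open>p dvd \<Sum>\<^sub># M'\<close> unfolding T[symmetric] by (simp add: int_dvd_int_iff)
          have i2: "int p dvd int x - int a" using x(2) cong_nat_int by blast
          have "int S - int a = (int T - int 0) + (int x - int a)"
            using ST by simp
          then have "int p dvd int S - int a" using i1 i2 by (metis dvd_add)
          then show False using False cong_nat_int by blast
        qed
      next
        fix c assume c: "c \<in> {1..p-1}"
        show "cntm p c M' \<le> p - 1 + Gm p c M'"
        proof (cases "c = a")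
          case True
          have "hh p a x = 0" using hh_a[OF pp a1 ap x(2)] .
          then show ?thesis using gC[OF a(1)] x(2) True unfolding MM cntm_add Gm_add by simp
        next
          case ca: False
          have nc: "\<not> [x = c] (mod p)"
          proof
            assume "[x = c] (mod p)"
            then have "[a = c] (mod p)" using x(2) by (metis cong_sym cong_trans)
            moreover have "a < p" "c < p" using ap c p2 by auto
            ultimately have "a = c" by (rule small_cong_eq)
            then show False using ca by simp
          qed
          have "cntm p c M \<le> cntm p a M" using amax[OF c] .
          moreover have "cntm p c M = cntm p c M'" using nc unfolding MM cntm_add by simp
          moreover have "cntm p a M = cntm p a M' + 1" using x(2) unfolding MM cntm_add by simp
          moreover have "cntm p a M' \<le> Gm p c M'" using cnt_le_G[OF pp a(1) c] ca by simp
          ultimately show ?thesis using p2 by simp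
        qed
      qed
      then show ?thesis using x(1) unfolding M'_def by blast
    next
      case True
      define n where "n = cntm p a M"
      define G where "G = Gm p a M"
      have gc: "int p dvd int a * int G - (int a * int n - int S)"
        using G_cong[OF pp a1 ap] unfolding G_def n_def S_def by blast
      have sa: "int p dvd int S - int a" using True cong_nat_int by blast
      have "int a * (int G - int n + 1) = (int a * int G - (int a * int n - int S)) - (int S - int a)"
        by (simp add: algebra_simps)
      then have "int p dvd int a * (int G - int n + 1)" using gc sa by (metis dvd_diff)
      moreover have "coprime (int p) (int a)"
        using cop[OF pp a1 ap] by (simp add: coprime_int_iff coprime_commute)
      ultimately have dG: "int p dvd int G - int n + 1"
        using coprime_dvd_mult_right_iff by (metis mult.commute)
      have nG: "n \<le> p - 1 + G" using gC[OF a(1)] unfolding n_def G_def .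
      have "\<exists>x\<in>#M. \<not> [x = a] (mod p)"
      proof (rule ccontr)
        assume "\<not> (\<exists>x\<in>#M. \<not> [x = a] (mod p))"
        then have all: "\<forall>x\<in>#M. [x = a] (mod p)" by blast
        have "G = 0" unfolding G_def using Gm_zero all hh_a[OF pp a1 ap] by blast
        moreover have "n = size M" unfolding n_def using cntm_all all by blast
        ultimately have "int p dvd int n - 1" "2 \<le> n" "n \<le> p - 1" using dG sz nG
          by (simp_all add: dvd_diff_commute)
        then have "int p dvd int (n - 1)" by (simp add: of_nat_diff)
        then have "p dvd (n - 1)" by (simp add: int_dvd_int_iff)
        moreover have "0 < n - 1" using \<open>2 \<le> n\<close> by simp
        ultimately have "p \<le> n - 1" by (rule dvd_imp_le)
        then show False using \<open>n \<le> p - 1\<close> \<open>2 \<le> n\<close> by simp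
      qed
      then obtain x where x: "x \<in># M" "\<not> [x = a] (mod p)" by blast
      have x0: "\<not> [x = 0] (mod p)" using NZ x(1) by (auto simp: cong_0_iff)
      obtain j0 where hb: "1 \<le> hh p a x" "hh p a x \<le> p - 2"
        using hh_bounds[OF pp a1 ap x0 x(2)] by blast
      define M' where "M' = M - {#x#}"
      have MM: "M = add_mset x M'" unfolding M'_def using insert_DiffM[OF x(1)] by simp
      have "good p M'"
        unfolding good_def
      proof (intro conjI ballI)
        show "\<not> p dvd \<Sum>\<^sub># M'"
        proof
          assume "p dvd \<Sum>\<^sub># M'"
          obtain T where T: "T = \<Sum>\<^sub># M'" by blast
          have ST: "S = T + x" unfolding S_def MM T by simp
          have i1: "int p dvd int T" using \<open>p dvd \<Sum>\<^sub># M'\<close> unfolding T[symmetric] by (simp add: int_dvd_int_iff)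
          have "int x - int a = (int S - int a) - int T"
            using ST by simp
          then have "int p dvd int x - int a" using i1 sa by (metis dvd_diff)
          then show False using x(2) cong_nat_int by blast
        qed
      next
        fix c assume c: "c \<in> {1..p-1}"
        show "cntm p c M' \<le> p - 1 + Gm p c M'"
        proof (cases "c = a")
          case True
          have e1: "cntm p a M' = n" using x(2) unfolding n_def MM cntm_add by simp
          have e2: "G = Gm p a M' + hh p a x" unfolding G_def MM Gm_add ..
          have "int G - int n + 1 > - int p" using nG p2 by linarith
          then have "int G - int n + 1 \<ge> 0" using int_dvd_nonneg dG by blast
          then have "n \<le> G + 1" by linarith
          then show ?thesis unfolding True using e1 e2 hb by linarith
        next
          case ca: False
          have "cntm p c M' \<le> cntm p c M" unfolding MM cntm_add by simp
          also have "\<dots> \<le> cntm p a M" using amax[OF c] .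
          also have "\<dots> = cntm p a M'" using x(2) unfolding MM cntm_add by simp
          also have "\<dots> \<le> Gm p c M'" using cnt_le_G[OF pp a(1) c] ca by simp
          finally show ?thesis by simp
        qed
      qed
      then show ?thesis using x(1) unfolding M'_def by blast
    qed
  qed
qed


lemma suff:
  assumes pp: "prime p"
  shows "good p M \<Longrightarrow> \<exists>\<delta>. mset \<delta> = M \<and> cumulative p \<delta>"
proof (induction "size M" arbitrary: M rule: less_induct)
  case less
  have Mne: "M \<noteq> {#}" using less.prems unfolding good_def by auto
  show ?case
  proof (cases "size M = 1")
    case True
    then obtain y where y: "M = {#y#}" using size_1_singleton_mset by blast
    have "\<not> p dvd y" using less.prems unfolding good_def y by simp
    then have "cumulative p [y]" unfolding cumulative_def psum_def by simp
    then show ?thesis using y by (intro exI[of _ "[y]"]) simp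
  next
    case False
    then have "size M \<ge> 2" using Mne by (cases "size M") auto
    then obtain x where x: "x \<in># M" "good p (M - {#x#})" using step[OF pp less.prems] by blast
    have "size (M - {#x#}) < size M" using size_Diff1_less[OF x(1)] .
    then obtain \<delta>' where d: "mset \<delta>' = M - {#x#}" "cumulative p \<delta>'" using less.hyps x(2) by blast
    have ms: "mset (\<delta>' @ [x]) = M" using d(1) insert_DiffM[OF x(1)] by simp
    have sm: "sum_list \<delta>' + x = \<Sum>\<^sub># M"
    proof -
      have "sum_list \<delta>' = \<Sum>\<^sub># (M - {#x#})" using d(1) sum_mset_sum_list[of \<delta>'] by simp
      moreover have "\<Sum>\<^sub># M = x + \<Sum>\<^sub># (M - {#x#})"
      proof -
        have "\<Sum>\<^sub># (add_mset x (M - {#x#})) = x + \<Sum>\<^sub># (M - {#x#})" by simp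
        then show ?thesis using insert_DiffM[OF x(1)] by simp
      qed
      ultimately show ?thesis by simp
    qed
    have "cumulative p (\<delta>' @ [x])"
      unfolding cumulative_def
    proof (intro conjI ballI)
      show "\<delta>' @ [x] \<noteq> []" by simp
    next
      fix j assume j: "j \<in> {1..length (\<delta>' @ [x])}"
      show "\<not> p dvd psum (\<delta>' @ [x]) j"
      proof (cases "j \<le> length \<delta>'")
        case True
        then have "psum (\<delta>' @ [x]) j = psum \<delta>' j" by (simp add: psum_def)
        then show ?thesis using d(2) j True unfolding cumulative_def by auto
      next
        case False
        then have "j = length \<delta>' + 1" using j by auto
        then have "psum (\<delta>' @ [x]) j = sum_list \<delta>' + x" by (simp add: psum_def)
        then show ?thesis using sm less.prems unfolding good_def by simp
      qed
    qed
    then show ?thesis using ms by blast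
  qed
qed

lemma nec:
  assumes pp: "prime p" and cu: "cumulative p \<delta>"
  shows "good p (mset \<delta>)"
  unfolding good_def
proof (intro conjI ballI)
  have "length \<delta> \<in> {1..length \<delta>}" using cu unfolding cumulative_def by (cases \<delta>) auto
  then have "\<not> p dvd psum \<delta> (length \<delta>)" using cu unfolding cumulative_def by blast
  then show "\<not> p dvd \<Sum>\<^sub># (mset \<delta>)" by (simp add: psum_def sum_mset_sum_list)
next
  fix a assume a: "a \<in> {1..p-1}"
  have p2: "2 \<le> p" using pp prime_ge_2_nat by blast
  have a1: "1 \<le> a" and ap: "a < p" using a p2 by auto
  obtain b where b: "[a*b = 1] (mod p)" using inv_ex[OF pp a1 ap] by blast
  have "cntm p a (mset \<delta>) \<le> (b * sum_list \<delta>) mod p + Gm p a (mset \<delta>)"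
    using nec_inv[OF pp a1 ap b] cu unfolding cumulative_def by blast
  moreover have "(b * sum_list \<delta>) mod p < p" using p2 by simp
  ultimately show "cntm p a (mset \<delta>) \<le> p - 1 + Gm p a (mset \<delta>)" by linarith
qed

lemma rvec_eq: "rvec p lam j = cntm p j (mset lam)"
proof -
  have nm: "nmult i lam = count (mset lam) i" for i
  proof -
    have "nmult i lam = length (filter (\<lambda>x. x = i) lam)"
      unfolding nmult_def by (simp add: length_filter_conv_card)
    also have "\<dots> = count (mset lam) i" by (metis count_conv_size_mset mset_filter size_mset)
    finally show ?thesis .
  qed
  define P where "P = (\<lambda>y. [y = j] (mod p))"
  have "size (filter_mset P (mset lam)) = sum (count (filter_mset P (mset lam))) (set_mset (filter_mset P (mset lam)))"
    by (rule size_multiset_overloaded_eq)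
  also have "\<dots> = (\<Sum>i\<in>{i\<in>set lam. P i}. count (mset lam) i)"
    by (rule sum.cong) auto
  finally show ?thesis unfolding rvec_def cntm_def nm P_def by simp
qed

lemma twist_eq:
  assumes pp: "prime p" and a1: "1 \<le> a" and ap: "a < p" and ab: "[a*b = 1] (mod p)"
    and j1: "1 \<le> j" and jp: "j < p"
  shows "twist p b r j = r ((a*j) mod p)"
proof -
  have p2: "2 \<le> p" using pp prime_ge_2_nat by blast
  have "(THE i. i \<in> {1..p-1} \<and> [j = b*i] (mod p)) = (a*j) mod p"
  proof (rule the_equality)
    have "\<not> p dvd a*j" using aj_ndvd[OF pp a1 ap j1 jp] .
    then have "(a*j) mod p \<noteq> 0" by (simp add: mod_eq_0_iff_dvd)
    moreover have "(a*j) mod p < p" using p2 by simp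
    ultimately have r: "(a*j) mod p \<in> {1..p-1}" by auto
    have "[b*((a*j) mod p) = b*(a*j)] (mod p)" by (simp add: cong_scalar_left)
    moreover have "[b*(a*j) = 1*j] (mod p)"
      using cong_scalar_right[OF ab, of j] by (simp add: ac_simps)
    ultimately have "[b*((a*j) mod p) = 1*j] (mod p)" by (rule cong_trans)
    then have "[b*((a*j) mod p) = j] (mod p)" by simp
    then show "(a*j) mod p \<in> {1..p-1} \<and> [j = b*((a*j) mod p)] (mod p)" using r by (simp add: cong_sym)
  next
    fix i assume i: "i \<in> {1..p-1} \<and> [j = b*i] (mod p)"
    have "[a*j = a*(b*i)] (mod p)" using i by (simp add: cong_scalar_left)
    moreover have "[a*(b*i) = 1*i] (mod p)"
      using cong_scalar_right[OF ab, of i] by (simp add: ac_simps)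
    ultimately have "[a*j = 1*i] (mod p)" by (rule cong_trans)
    then have "[a*j = i] (mod p)" by simp
    then have "(a*j) mod p = i mod p" unfolding cong_def .
    also have "\<dots> = i" using i p2 by auto
    finally show "i = (a*j) mod p" by simp
  qed
  then show ?thesis unfolding twist_def by simp
qed

lemma Gm_sum: "Gm p a M = (\<Sum>j=2..p-1. (p - j) * cntm p ((a*j) mod p) M)"
proof (induction M)
  case empty then show ?case by simp
next
  case (add y M)
  have "(\<Sum>j=2..p-1. (p - j) * cntm p ((a*j) mod p) (add_mset y M))
      = (\<Sum>j=2..p-1. (p - j) * cntm p ((a*j) mod p) M + (if [y = a*j] (mod p) then p - j else 0))"
    by (rule sum.cong) (simp_all add: cntm_add distrib_left)
  also have "\<dots> = Gm p a M + hh p a y"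
    unfolding add.IH hh_def by (simp add: sum.distrib)
  finally show ?case by (simp add: Gm_add)
qed

lemma qnorm_eq:
  assumes pp: "prime p" and a1: "1 \<le> a" and ap: "a < p" and ab: "[a*b = 1] (mod p)"
  shows "qnorm p (twist p b (rvec p lam)) = p - 1 + Gm p a (mset lam)"
proof -
  have "(\<Sum>i=2..p-1. (p - i) * twist p b (rvec p lam) i) = (\<Sum>j=2..p-1. (p - j) * cntm p ((a*j) mod p) (mset lam))"
    by (rule sum.cong) (auto simp: twist_eq[OF pp a1 ap ab] rvec_eq)
  then show ?thesis unfolding qnorm_def Gm_sum by simp
qed

lemma finite_rearr: "finite (rearrangements lam)"
proof -
  have "rearrangements lam \<subseteq> {xs. set xs \<subseteq> set lam \<and> length xs = length lam}"
    unfolding rearrangements_def by (auto dest: mset_eq_setD mset_eq_length)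
  then show ?thesis using finite_lists_length_eq[of "set lam" "length lam"] finite_subset by auto
qed


theorem theorem1:
  fixes p :: nat and lam :: "nat list"
  assumes "prime p" and "is_partition lam"
  shows "cnum p lam \<noteq> 0 \<longleftrightarrow>
    (\<not> p dvd sum_list lam \<and>
     (\<exists>a\<in>{1..p-1}. rvec p lam a = vmax p (rvec p lam) \<and>
        (\<exists>b\<in>{1..p-1}. [a * b = 1] (mod p) \<and>
           vmax p (rvec p lam) \<le> qnorm p (twist p b (rvec p lam)))))"
proof -
  note pp = assms(1)
  have p2: "2 \<le> p" using pp prime_ge_2_nat by blast
  define M where "M = mset lam"
  have sM: "\<Sum>\<^sub># M = sum_list lam" unfolding M_def by (simp add: sum_mset_sum_list)
  have rv: "rvec p lam = (\<lambda>j. cntm p j M)" unfolding M_def by (rule ext) (rule rvec_eq)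
  define F where "F = (\<lambda>j. cntm p j M) ` {1..p-1}"
  have fin: "finite F" unfolding F_def by simp
  have vm: "vmax p (rvec p lam) = Max F" unfolding vmax_def rv F_def ..
  have L1: "cnum p lam \<noteq> 0 \<longleftrightarrow> (\<exists>\<delta>. mset \<delta> = M \<and> cumulative p \<delta>)"
  proof -
    have "finite {\<delta> \<in> rearrangements lam. cumulative p \<delta>}" using finite_rearr by simp
    then have "cnum p lam \<noteq> 0 \<longleftrightarrow> {\<delta> \<in> rearrangements lam. cumulative p \<delta>} \<noteq> {}"
      unfolding cnum_def by simp
    also have "\<dots> \<longleftrightarrow> (\<exists>\<delta>. mset \<delta> = M \<and> cumulative p \<delta>)"
      unfolding rearrangements_def M_def by auto
    finally show ?thesis .
  qed
  have L2: "(\<exists>\<delta>. mset \<delta> = M \<and> cumulative p \<delta>) \<longleftrightarrow> good p M"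
    using nec[OF pp] suff[OF pp] by blast
  have L3: "good p M \<longleftrightarrow>
    (\<not> p dvd sum_list lam \<and>
     (\<exists>a\<in>{1..p-1}. rvec p lam a = vmax p (rvec p lam) \<and>
        (\<exists>b\<in>{1..p-1}. [a * b = 1] (mod p) \<and>
           vmax p (rvec p lam) \<le> qnorm p (twist p b (rvec p lam)))))"
  proof
    assume g: "good p M"
    have ne: "F \<noteq> {}" unfolding F_def using p2 by auto
    obtain a where a: "a \<in> {1..p-1}" "cntm p a M = Max F"
      using Max_in[OF fin ne] unfolding F_def by auto
    have a1: "1 \<le> a" and ap: "a < p" using a p2 by auto
    obtain b where b: "b \<in> {1..p-1}" "[a*b = 1] (mod p)" using inv_ex[OF pp a1 ap] by blast
    have "cntm p a M \<le> p - 1 + Gm p a M" using g a(1) unfolding good_def by blast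
    then have "vmax p (rvec p lam) \<le> qnorm p (twist p b (rvec p lam))"
      using vm a(2) qnorm_eq[OF pp a1 ap b(2), of lam] unfolding M_def by simp
    moreover have "rvec p lam a = vmax p (rvec p lam)" using vm a(2) rv by simp
    moreover have "\<not> p dvd sum_list lam" using g sM unfolding good_def by simp
    ultimately show "\<not> p dvd sum_list lam \<and>
     (\<exists>a\<in>{1..p-1}. rvec p lam a = vmax p (rvec p lam) \<and>
        (\<exists>b\<in>{1..p-1}. [a * b = 1] (mod p) \<and>
           vmax p (rvec p lam) \<le> qnorm p (twist p b (rvec p lam))))"
      using a(1) b by blast
  next
    assume R: "\<not> p dvd sum_list lam \<and>
     (\<exists>a\<in>{1..p-1}. rvec p lam a = vmax p (rvec p lam) \<and>
        (\<exists>b\<in>{1..p-1}. [a * b = 1] (mod p) \<and>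
           vmax p (rvec p lam) \<le> qnorm p (twist p b (rvec p lam))))"
    then obtain a b where a: "a \<in> {1..p-1}" "rvec p lam a = vmax p (rvec p lam)"
      and b: "b \<in> {1..p-1}" "[a * b = 1] (mod p)"
      and le: "vmax p (rvec p lam) \<le> qnorm p (twist p b (rvec p lam))" by blast
    have a1: "1 \<le> a" and ap: "a < p" using a p2 by auto
    have ca: "cntm p a M = Max F" using a(2) rv vm by simp
    have Ca: "cntm p a M \<le> p - 1 + Gm p a M"
      using le ca vm qnorm_eq[OF pp a1 ap b(2), of lam] unfolding M_def by simp
    show "good p M"
      unfolding good_def
    proof (intro conjI ballI)
      show "\<not> p dvd \<Sum>\<^sub># M" using R sM by simp
    next
      fix c assume c: "c \<in> {1..p-1}"
      show "cntm p c M \<le> p - 1 + Gm p c M"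
      proof (cases "c = a")
        case True then show ?thesis using Ca by simp
      next
        case False
        have "cntm p c M \<le> Max F" using fin c unfolding F_def by auto
        also have "\<dots> = cntm p a M" using ca by simp
        also have "\<dots> \<le> Gm p c M" using cnt_le_G[OF pp a(1) c] False by simp
        finally show ?thesis by simp
      qed
    qed
  qed
  show ?thesis using L1 L2 L3 by simp
qed

end
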